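(* Let $\mathcal{M}$ be a complete Riemannian submanifold of $\mathbb{R}^n$ with the induced Riemannian metric, let $f:\mathbb{R}^n\to\mathbb{R}$ be a proper lower semicontinuous function, and let $\tilde f$ be any smoothing function of $f$. If $x^*\in\mathcal{M}$ is a local minimizer of $f$ on $\mathcal{M}$, then $x^*$ is a stationary point of $f$ associated with $\tilde f$ on $\mathcal{M}$, i.e. \[ \liminf_{x\to x^*,\ x\in\mathcal{M},\ \mu\downarrow 0}\|\operatorname{grad}\tilde f(x,\mu)\|=0 . \]
   Context: A function $\tilde f:\mathbb{R}^n\times\mathbb{R}_+\to\mathbb{R}$ is a smoothing function of $f$ if $\tilde f(\cdot,\mu)$ is continuously differentiable on $\mathbb{R}^n$ for every $\mu>0$, $\lim_{z\to x,\mu\downarrow0}\tilde f(z,\mu)=f(x)$ for every $x$, and there exist a constant $\kappa>0$ and a function $\omega:(0,\infty)\to(0,\infty)$ with $\lim_{\mu\downarrow0}\omega(\mu)=0$ such that $|\tilde f(x,\mu)-f(x)|\le\kappa\,\omega(\mu)$ for all $x$ and $\mu>0$. Here $\operatorname{grad}\tilde f(x,\mu)$ denotes the Riemannian gradient of $\tilde f(\cdot,\mu)$ at $x\in\mathcal{M}$, which equals $\operatorname{Proj}_{T_x\mathcal{M}}\nabla_x\tilde f(x,\mu)$, the orthogonal projection onto the tangent space $T_x\mathcal{M}$. *)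

theory Defs
  imports "HOL-Analysis.Analysis"
begin

fun Ck_on :: "nat \<Rightarrow> ('a::euclidean_space) set \<Rightarrow> ('a \<Rightarrow> 'b::euclidean_space) \<Rightarrow> bool" where
  "Ck_on 0 U h = continuous_on U h"
| "Ck_on (Suc k) U h =
     (\<exists>D. (\<forall>x\<in>U. (h has_derivative D x) (at x)) \<and> (\<forall>v. Ck_on k U (\<lambda>x. D x v)))"

definition smooth_on :: "('a::euclidean_space) set \<Rightarrow> ('a \<Rightarrow> 'b::euclidean_space) \<Rightarrow> bool" where
  "smooth_on U h \<longleftrightarrow> open U \<and> (\<forall>k. Ck_on k U h)"

text \<open>Embedded smooth submanifold of R^n: locally the graph of a smooth map from a linear
  subspace T into its orthogonal complement.\<close>
definition embedded_submanifold :: "(real ^ 'n) set \<Rightarrow> bool" where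
  "embedded_submanifold M \<longleftrightarrow>
     (\<forall>p\<in>M. \<exists>T U W h. subspace T \<and> open U \<and> p \<in> U \<and> smooth_on W h \<and>
        (\<forall>t\<in>T. \<forall>u\<in>T. h t \<bullet> u = 0) \<and>
        M \<inter> U = {t + h t | t. t \<in> T \<and> t \<in> W} \<inter> U)"

definition curve_length :: "(real \<Rightarrow> real ^ 'n) \<Rightarrow> real" where
  "curve_length \<gamma> = integral {0..1} (\<lambda>t. norm (vector_derivative \<gamma> (at t)))"

definition curve_in :: "(real ^ 'n) set \<Rightarrow> (real \<Rightarrow> real ^ 'n) \<Rightarrow> real ^ 'n \<Rightarrow> real ^ 'n \<Rightarrow> bool" where
  "curve_in M \<gamma> x y \<longleftrightarrow> \<gamma> piecewise_C1_differentiable_on {0..1} \<and> \<gamma> ` {0..1} \<subseteq> M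
     \<and> \<gamma> 0 = x \<and> \<gamma> 1 = y"

text \<open>Completeness of M w.r.t. the Riemannian distance induced by the Euclidean metric
  (infimum of lengths of piecewise C^1 curves in M): every Cauchy sequence for that distance
  converges to a point of M.\<close>
definition riem_cauchy :: "(real ^ 'n) set \<Rightarrow> (nat \<Rightarrow> real ^ 'n) \<Rightarrow> bool" where
  "riem_cauchy M X \<longleftrightarrow> (\<forall>e>0. \<exists>N. \<forall>m\<ge>N. \<forall>k\<ge>N. \<exists>\<gamma>. curve_in M \<gamma> (X m) (X k) \<and> curve_length \<gamma> < e)"

definition riem_complete :: "(real ^ 'n) set \<Rightarrow> bool" where
  "riem_complete M \<longleftrightarrow> (\<forall>X. (\<forall>k. X k \<in> M) \<and> riem_cauchy M X \<longrightarrow> (\<exists>L\<in>M. X \<longlonglongrightarrow> L))"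

definition complete_riemannian_submanifold :: "(real ^ 'n) set \<Rightarrow> bool" where
  "complete_riemannian_submanifold M \<longleftrightarrow> embedded_submanifold M \<and> riem_complete M"

definition tangent_space :: "(real ^ 'n) set \<Rightarrow> real ^ 'n \<Rightarrow> (real ^ 'n) set" where
  "tangent_space M x = {v. \<exists>e>0. \<exists>\<gamma>. \<gamma> 0 = x \<and> (\<forall>t\<in>{-e<..<e}. \<gamma> t \<in> M) \<and>
                              (\<gamma> has_vector_derivative v) (at 0)}"

definition proj :: "(real ^ 'n) set \<Rightarrow> real ^ 'n \<Rightarrow> real ^ 'n" where
  "proj T v = (SOME w. w \<in> T \<and> (\<forall>u\<in>T. (v - w) \<bullet> u = 0))"

definition lsc :: "(real ^ 'n \<Rightarrow> real) \<Rightarrow> bool" where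
  "lsc f \<longleftrightarrow> (\<forall>t. closed {x. f x \<le> t})"

definition smoothing_function :: "(real ^ 'n \<Rightarrow> real \<Rightarrow> real) \<Rightarrow> (real ^ 'n \<Rightarrow> real) \<Rightarrow> bool" where
  "smoothing_function ft f \<longleftrightarrow>
     (\<forall>\<mu>>0. Ck_on 1 UNIV (\<lambda>z. ft z \<mu>)) \<and>
     (\<forall>x. ((\<lambda>(z,\<mu>). ft z \<mu>) \<longlongrightarrow> f x) (nhds x \<times>\<^sub>F at_right 0)) \<and>
     (\<exists>\<kappa>>0. \<exists>\<omega>::real \<Rightarrow> real. (\<forall>\<mu>>0. \<omega> \<mu> > 0) \<and> (\<omega> \<longlongrightarrow> 0) (at_right 0) \<and>
        (\<forall>x. \<forall>\<mu>>0. \<bar>ft x \<mu> - f x\<bar> \<le> \<kappa> * \<omega> \<mu>))"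

definition egrad :: "(real ^ 'n \<Rightarrow> real \<Rightarrow> real) \<Rightarrow> real ^ 'n \<Rightarrow> real \<Rightarrow> real ^ 'n" where
  "egrad ft x \<mu> = (THE g. ((\<lambda>z. ft z \<mu>) has_derivative (\<lambda>h. g \<bullet> h)) (at x))"

definition rgrad :: "(real ^ 'n) set \<Rightarrow> (real ^ 'n \<Rightarrow> real \<Rightarrow> real) \<Rightarrow> real ^ 'n \<Rightarrow> real \<Rightarrow> real ^ 'n" where
  "rgrad M ft x \<mu> = proj (tangent_space M x) (egrad ft x \<mu>)"

definition local_min_on :: "(real ^ 'n) set \<Rightarrow> (real ^ 'n \<Rightarrow> real) \<Rightarrow> real ^ 'n \<Rightarrow> bool" where
  "local_min_on M f xs \<longleftrightarrow> xs \<in> M \<and> (\<exists>\<delta>>0. \<forall>x\<in>M. dist x xs < \<delta> \<longrightarrow> f xs \<le> f x)"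

end

theory Submission
  imports Defs
begin


lemma ck1_deriv:
  assumes "Ck_on 1 U h"
  obtains D where "\<And>x. x \<in> U \<Longrightarrow> (h has_derivative D x) (at x)"
  using assms by auto

lemma ck1_cont:
  assumes "Ck_on 1 U h"
  shows "continuous_on U h"
proof -
  obtain D where "\<And>x. x \<in> U \<Longrightarrow> (h has_derivative D x) (at x)"
    using ck1_deriv[OF assms] by blast
  then show ?thesis
    by (meson continuous_at_imp_continuous_on has_derivative_continuous)
qed

lemma functional_rep:
  fixes L :: "'a::euclidean_space \<Rightarrow> real"
  assumes "linear L"
  shows "L = (\<lambda>h. (\<Sum>i\<in>Basis. L i *\<^sub>R i) \<bullet> h)"
proof
  fix h
  have "L h = L (\<Sum>i\<in>Basis. (h \<bullet> i) *\<^sub>R i)" by (simp add: euclidean_representation)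
  also have "\<dots> = (\<Sum>i\<in>Basis. (h \<bullet> i) * L i)"
    using assms by (simp add: linear_sum linear_scale)
  also have "\<dots> = (\<Sum>i\<in>Basis. L i *\<^sub>R i) \<bullet> h"
    by (auto simp: inner_sum_right inner_commute intro!: sum.cong)
  finally show "L h = (\<Sum>i\<in>Basis. L i *\<^sub>R i) \<bullet> h" .
qed

lemma egrad_works:
  assumes "Ck_on 1 UNIV (\<lambda>z. ft z \<mu>)"
  shows "((\<lambda>z. ft z \<mu>) has_derivative (\<lambda>h. egrad ft x \<mu> \<bullet> h)) (at x)"
proof -
  obtain D where D: "((\<lambda>z. ft z \<mu>) has_derivative D) (at x)"
    using ck1_deriv[OF assms] by blast
  then have "linear D" using has_derivative_linear by blast
  then have E: "D = (\<lambda>h. (\<Sum>i\<in>Basis. D i *\<^sub>R i) \<bullet> h)" by (rule functional_rep)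
  define g where "g = (\<Sum>i\<in>Basis. D i *\<^sub>R i)"
  have g: "((\<lambda>z. ft z \<mu>) has_derivative (\<lambda>h. g \<bullet> h)) (at x)" using D E g_def by simp
  have "egrad ft x \<mu> = g"
    unfolding egrad_def
  proof (rule the_equality)
    fix g' assume "((\<lambda>z. ft z \<mu>) has_derivative (\<lambda>h. g' \<bullet> h)) (at x)"
    then have "(\<lambda>h. g' \<bullet> h) = (\<lambda>h. g \<bullet> h)" using g has_derivative_unique by blast
    then have "g' \<bullet> (g' - g) = g \<bullet> (g' - g)" by metis
    then have "(g' - g) \<bullet> (g' - g) = 0" by (simp add: inner_diff_left)
    then show "g' = g" by simp
  qed (rule g)
  then show ?thesis using g by simp
qed

lemma proj_works:
  assumes "subspace T"
  shows "proj T y \<in> T \<and> (\<forall>u\<in>T. (y - proj T y) \<bullet> u = 0)"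
proof -
  obtain a b where "a \<in> span T" "\<And>w. w \<in> span T \<Longrightarrow> orthogonal b w" "y = a + b"
    using orthogonal_subspace_decomp_exists[of T y] by metis
  moreover have sT: "span T = T" using assms by simp
  ultimately have "\<exists>w. w \<in> T \<and> (\<forall>u\<in>T. (y - w) \<bullet> u = 0)"
    by (intro exI[of _ a]) (auto simp: orthogonal_def)
  then show ?thesis unfolding proj_def by (rule someI_ex)
qed

lemma proj_unique:
  assumes "subspace T" "a \<in> T" "\<forall>u\<in>T. (y - a) \<bullet> u = 0"
  shows "proj T y = a"
proof -
  have p: "proj T y \<in> T" "\<forall>u\<in>T. (y - proj T y) \<bullet> u = 0" using proj_works[OF assms(1)] by auto
  have d: "proj T y - a \<in> T" using p(1) assms(2) assms(1) by (simp add: subspace_diff)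
  have "(proj T y - a) \<bullet> (proj T y - a) = (y - a) \<bullet> (proj T y - a) - (y - proj T y) \<bullet> (proj T y - a)"
    by (simp add: inner_diff_left)
  also have "\<dots> = 0" using d p assms by simp
  finally show ?thesis by simp
qed

lemma proj_linear:
  assumes "subspace T"
  shows "linear (proj T)"
proof (rule linearI)
  fix x y
  show "proj T (x + y) = proj T x + proj T y"
    using proj_works[OF assms, of x] proj_works[OF assms, of y]
    by (intro proj_unique[OF assms]) (auto simp: subspace_add[OF assms] algebra_simps inner_diff_left inner_add_left)
next
  fix c x
  show "proj T (c *\<^sub>R x) = c *\<^sub>R proj T x"
    using proj_works[OF assms, of x]
    by (intro proj_unique[OF assms]) (auto simp: subspace_scale[OF assms] inner_diff_left
         simp flip: scaleR_diff_right)
qed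

lemma graph_dist:
  fixes t t' :: "'a::euclidean_space"
  assumes "subspace T" "t \<in> T" "t' \<in> T" "\<forall>u\<in>T. a \<bullet> u = 0" "\<forall>u\<in>T. b \<bullet> u = 0"
  shows "norm (t - t') \<le> norm ((t + a) - (t' + b))"
proof -
  have tt: "t - t' \<in> T" using assms by (simp add: subspace_diff)
  have z: "a \<bullet> t = 0" "a \<bullet> t' = 0" "b \<bullet> t = 0" "b \<bullet> t' = 0"
    using assms by (auto simp: inner_commute)
  have o: "(t - t') \<bullet> (a - b) = 0" using z by (simp add: inner_diff_right inner_diff_left inner_commute)
  have e: "(t + a) - (t' + b) = (t - t') + (a - b)" by simp
  show ?thesis unfolding e norm_le using o
    by (simp add: inner_add_left inner_add_right inner_commute)
qed



lemma cont_ev: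
  assumes "isCont f x" "open U" "f x \<in> U"
  shows "\<forall>\<^sub>F y in nhds x. f y \<in> U"
proof -
  have "\<forall>\<^sub>F y in at x. f y \<in> U" using assms unfolding isCont_def tendsto_def by blast
  then have "\<forall>\<^sub>F y in nhds x. y \<noteq> x \<longrightarrow> y \<in> UNIV \<longrightarrow> f y \<in> U"
    unfolding eventually_at_filter .
  then show ?thesis by (rule eventually_mono) (use assms(3) in auto)
qed

lemma tangent_sub:
  fixes M :: "(real ^ 'n) set"
  assumes T: "subspace T" and U: "open U" and W: "open W"
    and Dh: "\<And>s. s \<in> W \<Longrightarrow> (h has_derivative Dh s) (at s)"
    and orth: "\<forall>t\<in>T. \<forall>u\<in>T. h t \<bullet> u = 0"
    and MU: "M \<inter> U = {t + h t | t. t \<in> T \<and> t \<in> W} \<inter> U"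
    and t0: "t0 \<in> T" "t0 \<in> W" "t0 + h t0 \<in> U"
  shows "(\<lambda>u. u + Dh t0 u) ` T \<subseteq> tangent_space M (t0 + h t0)"
proof
  fix v assume "v \<in> (\<lambda>u. u + Dh t0 u) ` T"
  then obtain u where u: "u \<in> T" "v = u + Dh t0 u" by blast
  define \<gamma> where "\<gamma> = (\<lambda>\<tau>::real. (t0 + \<tau> *\<^sub>R u) + h (t0 + \<tau> *\<^sub>R u))"
  have lin: "((\<lambda>\<tau>::real. t0 + \<tau> *\<^sub>R u) has_derivative (\<lambda>\<tau>. \<tau> *\<^sub>R u)) (at 0)"
    by (auto intro!: derivative_eq_intros)
  have hc: "((\<lambda>\<tau>::real. h (t0 + \<tau> *\<^sub>R u)) has_derivative (\<lambda>\<tau>. Dh t0 (\<tau> *\<^sub>R u))) (at 0)"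
    using has_derivative_compose[OF lin, of h "Dh t0"] Dh[OF t0(2)] by simp
  have gd: "(\<gamma> has_derivative (\<lambda>\<tau>. \<tau> *\<^sub>R u + Dh t0 (\<tau> *\<^sub>R u))) (at 0)"
    unfolding \<gamma>_def by (rule has_derivative_add[OF lin hc])
  have "linear (Dh t0)" using Dh[OF t0(2)] has_derivative_linear by blast
  then have "(\<lambda>\<tau>. \<tau> *\<^sub>R u + Dh t0 (\<tau> *\<^sub>R u)) = (\<lambda>\<tau>. \<tau> *\<^sub>R v)"
    by (auto simp: u linear_scale scaleR_add_right)
  then have gv: "(\<gamma> has_vector_derivative v) (at 0)"
    using gd by (simp add: has_vector_derivative_def)
  have "isCont \<gamma> 0" using gd has_derivative_continuous by blast
  moreover have "\<gamma> 0 \<in> U" using t0 by (simp add: \<gamma>_def)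
  ultimately have ev1: "\<forall>\<^sub>F \<tau> in nhds 0. \<gamma> \<tau> \<in> U"
    using U cont_ev by blast
  have "isCont (\<lambda>\<tau>::real. t0 + \<tau> *\<^sub>R u) 0" using lin has_derivative_continuous by blast
  moreover have "t0 + 0 *\<^sub>R u \<in> W" using t0 by simp
  ultimately have ev2: "\<forall>\<^sub>F \<tau> in nhds 0. t0 + \<tau> *\<^sub>R u \<in> W"
    using W cont_ev[where f="\<lambda>\<tau>::real. t0 + \<tau> *\<^sub>R u"] by blast
  obtain e where e: "e > 0" "\<And>\<tau>. dist \<tau> 0 < e \<Longrightarrow> \<gamma> \<tau> \<in> U \<and> t0 + \<tau> *\<^sub>R u \<in> W"
    using eventually_conj[OF ev1 ev2] unfolding eventually_nhds_metric by blast
  have "\<forall>\<tau>\<in>{-e<..<e}. \<gamma> \<tau> \<in> M"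
  proof
    fix \<tau> :: real assume "\<tau> \<in> {-e<..<e}"
    then have "dist \<tau> 0 < e" by (auto simp: dist_real_def)
    then have a: "\<gamma> \<tau> \<in> U" "t0 + \<tau> *\<^sub>R u \<in> W" using e by auto
    have "t0 + \<tau> *\<^sub>R u \<in> T" using T t0 u by (simp add: subspace_add subspace_scale)
    then have "\<gamma> \<tau> \<in> M \<inter> U" unfolding MU using a unfolding \<gamma>_def by blast
    then show "\<gamma> \<tau> \<in> M" by blast
  qed
  moreover have "\<gamma> 0 = t0 + h t0" by (simp add: \<gamma>_def)
  ultimately show "v \<in> tangent_space M (t0 + h t0)"
    unfolding tangent_space_def using e(1) gv by blast
qed

lemma tangent_super:
  fixes M :: "(real ^ 'n) set"
  assumes T: "subspace T" and U: "open U" and W: "open W"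
    and Dh: "\<And>s. s \<in> W \<Longrightarrow> (h has_derivative Dh s) (at s)"
    and orth: "\<forall>t\<in>T. \<forall>u\<in>T. h t \<bullet> u = 0"
    and MU: "M \<inter> U = {t + h t | t. t \<in> T \<and> t \<in> W} \<inter> U"
    and t0: "t0 \<in> T" "t0 \<in> W" "t0 + h t0 \<in> U"
  shows "tangent_space M (t0 + h t0) \<subseteq> (\<lambda>u. u + Dh t0 u) ` T"
proof
  fix v assume "v \<in> tangent_space M (t0 + h t0)"
  then obtain e \<gamma> where e: "e > 0" "\<gamma> 0 = t0 + h t0" "\<forall>\<tau>\<in>{-e<..<e}. \<gamma> \<tau> \<in> M"
    "(\<gamma> has_vector_derivative v) (at 0)"
    unfolding tangent_space_def by blast
  define P where "P = proj T"
  have Pg: "\<And>t. t \<in> T \<Longrightarrow> t \<in> W \<Longrightarrow> P (t + h t) = t"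
    unfolding P_def using orth by (intro proj_unique[OF T]) auto
  have "linear P" unfolding P_def by (rule proj_linear[OF T])
  then have bl: "bounded_linear P" by (simp add: linear_conv_bounded_linear)
  have gd: "(\<gamma> has_derivative (\<lambda>\<tau>. \<tau> *\<^sub>R v)) (at 0)"
    using e(4) by (simp add: has_vector_derivative_def)
  have sd: "((\<lambda>\<tau>. P (\<gamma> \<tau>)) has_derivative (\<lambda>\<tau>. P (\<tau> *\<^sub>R v))) (at 0)"
    by (rule bounded_linear.has_derivative[OF bl gd])
  have P0: "P (\<gamma> 0) = t0" using e(2) Pg t0 by simp
  have hd: "((\<lambda>\<tau>. h (P (\<gamma> \<tau>))) has_derivative (\<lambda>\<tau>. Dh t0 (P (\<tau> *\<^sub>R v)))) (at 0)"
    using has_derivative_compose[OF sd, of h "Dh t0"] Dh[OF t0(2)] P0 by simp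
  have sumd: "((\<lambda>\<tau>. P (\<gamma> \<tau>) + h (P (\<gamma> \<tau>))) has_derivative
       (\<lambda>\<tau>. P (\<tau> *\<^sub>R v) + Dh t0 (P (\<tau> *\<^sub>R v)))) (at 0)"
    by (rule has_derivative_add[OF sd hd])
  have "isCont \<gamma> 0" using gd has_derivative_continuous by blast
  moreover have "\<gamma> 0 \<in> U" using e(2) t0(3) by simp
  ultimately have ev1: "\<forall>\<^sub>F \<tau> in nhds 0. \<gamma> \<tau> \<in> U" using cont_ev U by blast
  have ev2: "\<forall>\<^sub>F \<tau> in nhds 0. \<tau> \<in> {-e<..<e}"
    unfolding eventually_nhds_metric using e(1)
    by (intro exI[of _ e]) (auto simp: dist_real_def)
  have "\<forall>\<^sub>F \<tau> in nhds 0. P (\<gamma> \<tau>) + h (P (\<gamma> \<tau>)) = \<gamma> \<tau>"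
    using eventually_conj[OF ev1 ev2]
  proof (rule eventually_mono)
    fix \<tau> :: real assume a: "\<gamma> \<tau> \<in> U \<and> \<tau> \<in> {-e<..<e}"
    then have "\<gamma> \<tau> \<in> M \<inter> U" using e(3) by blast
    then obtain t where t: "\<gamma> \<tau> = t + h t" "t \<in> T" "t \<in> W" unfolding MU by blast
    then show "P (\<gamma> \<tau>) + h (P (\<gamma> \<tau>)) = \<gamma> \<tau>" using Pg by simp
  qed
  then have "\<forall>\<^sub>F \<tau> in at 0. P (\<gamma> \<tau>) + h (P (\<gamma> \<tau>)) = \<gamma> \<tau>"
    by (rule filter_leD[rotated]) (simp add: at_within_def)
  then have "(\<gamma> has_derivative (\<lambda>\<tau>. P (\<tau> *\<^sub>R v) + Dh t0 (P (\<tau> *\<^sub>R v)))) (at 0)"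
    using has_derivative_transform_eventually[OF sumd] P0 e(2) by simp
  then have "(\<lambda>\<tau>. \<tau> *\<^sub>R v) = (\<lambda>\<tau>. P (\<tau> *\<^sub>R v) + Dh t0 (P (\<tau> *\<^sub>R v)))"
    using gd has_derivative_unique by blast
  from fun_cong[OF this, of 1] have "v = P v + Dh t0 (P v)" by simp
  moreover have "P v \<in> T" unfolding P_def using proj_works[OF T] by blast
  ultimately show "v \<in> (\<lambda>u. u + Dh t0 u) ` T" by blast
qed

lemma tangent_proj:
  fixes M :: "(real ^ 'n) set"
  assumes T: "subspace T" and U: "open U" and W: "open W"
    and Dh: "\<And>s. s \<in> W \<Longrightarrow> (h has_derivative Dh s) (at s)"
    and orth: "\<forall>t\<in>T. \<forall>u\<in>T. h t \<bullet> u = 0"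
    and MU: "M \<inter> U = {t + h t | t. t \<in> T \<and> t \<in> W} \<inter> U"
    and t0: "t0 \<in> T" "t0 \<in> W" "t0 + h t0 \<in> U"
  shows "proj (tangent_space M (t0 + h t0)) g \<in> tangent_space M (t0 + h t0) \<and>
     (\<forall>u\<in>tangent_space M (t0 + h t0). (g - proj (tangent_space M (t0 + h t0)) g) \<bullet> u = 0)"
proof -
  have eq: "tangent_space M (t0 + h t0) = (\<lambda>u. u + Dh t0 u) ` T"
    using tangent_sub[OF assms] tangent_super[OF assms] by blast
  have "linear (Dh t0)" using Dh[OF t0(2)] has_derivative_linear by blast
  then have L: "linear (\<lambda>u. u + Dh t0 u)"
    by (intro linearI) (auto simp: linear_add linear_scale scaleR_add_right)
  have "subspace ((\<lambda>u. u + Dh t0 u) ` T)"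
    unfolding subspace_def
  proof (intro conjI ballI allI)
    show "0 \<in> (\<lambda>u. u + Dh t0 u) ` T"
    proof (rule image_eqI)
      show "0 = 0 + Dh t0 0" using \<open>linear (Dh t0)\<close> by (simp add: linear_0)
    qed (rule subspace_0[OF T])
  next
    fix x y assume "x \<in> (\<lambda>u. u + Dh t0 u) ` T" "y \<in> (\<lambda>u. u + Dh t0 u) ` T"
    then obtain a b where "a \<in> T" "b \<in> T" "x = a + Dh t0 a" "y = b + Dh t0 b" by blast
    show "x + y \<in> (\<lambda>u. u + Dh t0 u) ` T"
    proof (rule image_eqI)
      show "x + y = (a + b) + Dh t0 (a + b)" using \<open>linear (Dh t0)\<close> \<open>x = a + Dh t0 a\<close> \<open>y = b + Dh t0 b\<close>
        by (simp add: linear_add)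
    qed (rule subspace_add[OF T \<open>a \<in> T\<close> \<open>b \<in> T\<close>])
  next
    fix c :: real and x assume "x \<in> (\<lambda>u. u + Dh t0 u) ` T"
    then obtain a where "a \<in> T" "x = a + Dh t0 a" by blast
    show "c *\<^sub>R x \<in> (\<lambda>u. u + Dh t0 u) ` T"
    proof (rule image_eqI)
      show "c *\<^sub>R x = c *\<^sub>R a + Dh t0 (c *\<^sub>R a)" using \<open>linear (Dh t0)\<close> \<open>x = a + Dh t0 a\<close>
        by (simp add: linear_scale scaleR_add_right)
    qed (rule subspace_scale[OF T \<open>a \<in> T\<close>])
  qed
  then show ?thesis unfolding eq by (rule proj_works)
qed



lemma core:
  fixes M :: "(real ^ 'n) set" and f :: "real ^ 'n \<Rightarrow> real"
    and ft :: "real ^ 'n \<Rightarrow> real \<Rightarrow> real" and xs :: "real ^ 'n"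
  assumes T: "subspace T" and U: "open U" and W: "open W"
    and Dh: "\<And>s. s \<in> W \<Longrightarrow> (h has_derivative Dh s) (at s)"
    and hc: "continuous_on W h"
    and orth: "\<forall>t\<in>T. \<forall>u\<in>T. h t \<bullet> u = 0"
    and MU: "M \<inter> U = {t + h t | t. t \<in> T \<and> t \<in> W} \<inter> U"
    and s0: "s0 \<in> T" "s0 \<in> W" "xs = s0 + h s0"
    and r: "r > 0" "cball s0 r \<subseteq> W" "\<And>t. dist t s0 \<le> r \<Longrightarrow> t + h t \<in> U \<and> dist (t + h t) xs < \<delta>"
    and lmin: "\<forall>x\<in>M. dist x xs < \<delta> \<longrightarrow> f xs \<le> f x"
    and C1: "\<forall>\<mu>>0. Ck_on 1 UNIV (\<lambda>z. ft z \<mu>)"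
    and kap: "\<kappa> > 0" and om: "(\<omega> \<longlongrightarrow> 0) (at_right 0)"
    and bnd: "\<forall>x. \<forall>\<mu>>0. \<bar>ft x \<mu> - f x\<bar> \<le> \<kappa> * \<omega> \<mu>"
    and d: "d > 0" and b: "b > 0" and eps: "\<epsilon> > 0"
  shows "\<exists>x \<mu>. x \<in> M \<and> dist x xs < d \<and> 0 < \<mu> \<and> \<mu> < b \<and> norm (rgrad M ft x \<mu>) < \<epsilon>"
proof -
  define m where "m = min r (min d (\<epsilon> / 3))"
  have m: "m > 0" "m \<le> r" "m \<le> d" "m \<le> \<epsilon> / 3" using r d eps by (auto simp: m_def)
  define c where "c = m^2 / (2 * \<kappa>)"
  have c: "c > 0" using m kap by (simp add: c_def)
  have "\<forall>\<^sub>F \<mu> in at_right 0. \<omega> \<mu> < c"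
    using om c by (simp add: order_tendstoD(2))
  moreover have "\<forall>\<^sub>F \<mu> in at_right (0::real). \<mu> \<in> {0<..<b}" using b by (rule eventually_at_right_real)
  ultimately have "\<forall>\<^sub>F \<mu> in at_right (0::real). \<omega> \<mu> < c \<and> \<mu> \<in> {0<..<b}" by (rule eventually_conj)
  then obtain \<mu> where mu: "\<omega> \<mu> < c" "0 < \<mu>" "\<mu> < b"
    using eventually_happens[of _ "at_right (0::real)"] by auto
  have C1m: "Ck_on 1 UNIV (\<lambda>z. ft z \<mu>)" using C1 mu by auto
  define F where "F = (\<lambda>x. ft x \<mu> + (x - xs) \<bullet> (x - xs))"
  define \<phi> where "\<phi> = (\<lambda>t. t + h t)"
  define K where "K = T \<inter> cball s0 r"
  have Kc: "compact K" unfolding K_def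
    using compact_Int_closed[OF compact_cball closed_subspace[OF T], of s0 r] by (simp add: Int_commute)
  have Kne: "K \<noteq> {}" using s0 r unfolding K_def by auto
  have KW: "K \<subseteq> W" using r unfolding K_def by auto
  have contF: "continuous_on UNIV F"
    unfolding F_def using ck1_cont[OF C1m] by (intro continuous_intros) auto
  have contphi: "continuous_on K \<phi>"
    unfolding \<phi>_def using continuous_on_subset[OF hc KW] by (intro continuous_intros) auto
  have "continuous_on K (\<lambda>t. F (\<phi> t))"
    using continuous_on_compose2[OF contF contphi] by simp
  then obtain tm where tm: "tm \<in> K" "\<And>t. t \<in> K \<Longrightarrow> F (\<phi> tm) \<le> F (\<phi> t)"
    using continuous_attains_inf[OF Kc Kne] by blast
  define xm where "xm = \<phi> tm"
  have tmT: "tm \<in> T" "tm \<in> W" "dist tm s0 \<le> r" using tm KW unfolding K_def by (auto simp: dist_commute)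
  have xmU: "xm \<in> U" "dist xm xs < \<delta>" using r(3)[OF tmT(3)] unfolding xm_def \<phi>_def by auto
  have xmM: "xm \<in> M" using MU tmT xmU unfolding xm_def \<phi>_def by blast
  have fle: "f xs \<le> f xm" using lmin xmM xmU by blast
  have xs0: "\<phi> s0 = xs" using s0 by (simp add: \<phi>_def)
  have "s0 \<in> K" using s0 r unfolding K_def by auto
  then have "F (\<phi> tm) \<le> F (\<phi> s0)" by (rule tm(2))
  then have "F xm \<le> F xs" unfolding xm_def xs0 .
  then have Fle: "ft xm \<mu> + (xm - xs) \<bullet> (xm - xs) \<le> ft xs \<mu>" by (simp add: F_def)
  have "\<bar>ft xs \<mu> - f xs\<bar> \<le> \<kappa> * \<omega> \<mu>" using bnd mu(2) by blast
  then have b1: "ft xs \<mu> \<le> f xs + \<kappa> * \<omega> \<mu>" by (simp add: abs_le_iff)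
  have "\<bar>ft xm \<mu> - f xm\<bar> \<le> \<kappa> * \<omega> \<mu>" using bnd mu(2) by blast
  then have b2: "f xm - \<kappa> * \<omega> \<mu> \<le> ft xm \<mu>" by (simp add: abs_le_iff)
  define \<eta> where "\<eta> = norm (xm - xs)"
  have "\<eta>^2 = (xm - xs) \<bullet> (xm - xs)" by (simp add: \<eta>_def power2_norm_eq_inner)
  also have "\<dots> \<le> 2 * \<kappa> * \<omega> \<mu>" using Fle b1 b2 fle by linarith
  also have "\<dots> < 2 * \<kappa> * c" using mu(1) kap by (intro mult_strict_left_mono) auto
  also have "\<dots> = m^2" using kap by (simp add: c_def)
  finally have etasq: "\<eta>^2 < m^2" .
  have eta: "\<eta> < m" by (rule power_less_imp_less_base[OF etasq]) (use m(1) in simp)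
  have eta0: "\<eta> \<ge> 0" by (simp add: \<eta>_def)
  have htm1: "\<forall>u\<in>T. h tm \<bullet> u = 0" using orth tmT(1) by blast
  have htm2: "\<forall>u\<in>T. h s0 \<bullet> u = 0" using orth s0(1) by blast
  note htm = htm1 htm2
  have "norm (tm - s0) \<le> norm ((tm + h tm) - (s0 + h s0))"
    by (rule graph_dist[OF T tmT(1) s0(1) htm])
  then have "norm (tm - s0) \<le> norm (xm - xs)" unfolding xm_def \<phi>_def s0(3) .
  then have dts: "dist tm s0 \<le> \<eta>" by (simp add: \<eta>_def dist_norm)
  define g where "g = egrad ft xm \<mu>"
  define G where "G = g + 2 *\<^sub>R (xm - xs)"
  have stat: "G \<bullet> v = 0" if v: "v \<in> tangent_space M xm" for v
  proof -
    obtain e \<gamma> where e: "e > 0" "\<gamma> 0 = xm" "\<forall>\<tau>\<in>{-e<..<e}. \<gamma> \<tau> \<in> M"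
      "(\<gamma> has_vector_derivative v) (at 0)"
      using v unfolding tangent_space_def by blast
    have gd: "(\<gamma> has_derivative (\<lambda>\<tau>. \<tau> *\<^sub>R v)) (at 0)"
      using e(4) by (simp add: has_vector_derivative_def)
    have ftd: "((\<lambda>z. ft z \<mu>) has_derivative (\<lambda>k. g \<bullet> k)) (at (\<gamma> 0))"
      unfolding g_def e(2) by (rule egrad_works[where ft=ft and \<mu>=\<mu>, OF C1m])
    have d1: "((\<lambda>\<tau>. ft (\<gamma> \<tau>) \<mu>) has_derivative (\<lambda>\<tau>. g \<bullet> (\<tau> *\<^sub>R v))) (at 0)"
      using has_derivative_compose[OF gd ftd] by simp
    have gx: "((\<lambda>\<tau>. \<gamma> \<tau> - xs) has_derivative (\<lambda>\<tau>. \<tau> *\<^sub>R v - 0)) (at 0)"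
      by (rule has_derivative_diff[OF gd has_derivative_const])
    have d2: "((\<lambda>\<tau>. (\<gamma> \<tau> - xs) \<bullet> (\<gamma> \<tau> - xs)) has_derivative
       (\<lambda>k. (\<gamma> 0 - xs) \<bullet> (k *\<^sub>R v - 0) + (k *\<^sub>R v - 0) \<bullet> (\<gamma> 0 - xs))) (at 0)"
      by (rule has_derivative_inner[OF gx gx])
    have d3: "((\<lambda>\<tau>. F (\<gamma> \<tau>)) has_derivative (\<lambda>k. g \<bullet> (k *\<^sub>R v) +
       ((\<gamma> 0 - xs) \<bullet> (k *\<^sub>R v - 0) + (k *\<^sub>R v - 0) \<bullet> (\<gamma> 0 - xs)))) (at 0)"
      unfolding F_def by (rule has_derivative_add[OF d1 d2])
    have "(\<lambda>k. g \<bullet> (k *\<^sub>R v) + ((\<gamma> 0 - xs) \<bullet> (k *\<^sub>R v - 0) + (k *\<^sub>R v - 0) \<bullet> (\<gamma> 0 - xs)))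
        = (\<lambda>k. (G \<bullet> v) * k)"
      by (rule ext) (simp add: G_def e(2) inner_add_left inner_commute algebra_simps)
    then have DD: "((\<lambda>\<tau>. F (\<gamma> \<tau>)) has_field_derivative (G \<bullet> v)) (at 0)"
      using d3 unfolding has_field_derivative_def by simp
    have "isCont \<gamma> 0" using gd has_derivative_continuous by blast
    moreover have "\<gamma> 0 \<in> U \<inter> ball xm (r - \<eta>)" using e(2) xmU eta m by simp
    moreover have "open (U \<inter> ball xm (r - \<eta>))" using U by auto
    ultimately have ev1: "\<forall>\<^sub>F \<tau> in nhds 0. \<gamma> \<tau> \<in> U \<inter> ball xm (r - \<eta>)"
      using cont_ev by blast
    have ev2: "\<forall>\<^sub>F \<tau> in nhds 0. \<tau> \<in> {-e<..<e}"
      unfolding eventually_nhds_metric using e(1)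
      by (intro exI[of _ e]) (auto simp: dist_real_def)
    obtain d' where d': "d' > 0" "\<And>\<tau>. dist \<tau> 0 < d' \<Longrightarrow> \<gamma> \<tau> \<in> U \<inter> ball xm (r - \<eta>) \<and> \<tau> \<in> {-e<..<e}"
      using eventually_conj[OF ev1 ev2] unfolding eventually_nhds_metric by blast
    have "\<forall>\<tau>. \<bar>0 - \<tau>\<bar> < d' \<longrightarrow> F (\<gamma> 0) \<le> F (\<gamma> \<tau>)"
    proof (intro allI impI)
      fix \<tau> :: real assume "\<bar>0 - \<tau>\<bar> < d'"
      then have "dist \<tau> 0 < d'" by (simp add: dist_real_def)
      then have a: "\<gamma> \<tau> \<in> U" "dist xm (\<gamma> \<tau>) < r - \<eta>" "\<tau> \<in> {-e<..<e}" using d'(2) by auto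
      then have "\<gamma> \<tau> \<in> M \<inter> U" using e(3) by blast
      then obtain t' where t': "\<gamma> \<tau> = t' + h t'" "t' \<in> T" "t' \<in> W" unfolding MU by blast
      have ht': "\<forall>u\<in>T. h t' \<bullet> u = 0" using orth t'(2) by blast
      have "norm (t' - tm) \<le> norm ((t' + h t') - (tm + h tm))"
        by (rule graph_dist[OF T t'(2) tmT(1) ht' htm1])
      then have "dist t' tm < r - \<eta>" using a(2) t'(1)
        by (simp add: dist_norm xm_def \<phi>_def norm_minus_commute)
      then have "dist t' s0 < r" using dts dist_triangle[of t' s0 tm] by linarith
      then have "t' \<in> K" using t'(2) unfolding K_def by (simp add: dist_commute)
      then have "F (\<phi> tm) \<le> F (\<phi> t')" by (rule tm(2))
      then show "F (\<gamma> 0) \<le> F (\<gamma> \<tau>)" using e(2) t'(1) by (simp add: xm_def \<phi>_def)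
    qed
    then show "G \<bullet> v = 0" using DERIV_local_min[OF DD d'(1)] by simp
  qed
  define V where "V = tangent_space M xm"
  have pr: "proj V g \<in> V \<and> (\<forall>u\<in>V. (g - proj V g) \<bullet> u = 0)"
    unfolding V_def xm_def \<phi>_def using tangent_proj[OF T U W Dh orth MU tmT(1,2)] xmU
    by (simp add: xm_def \<phi>_def)
  define w where "w = proj V g"
  have rg: "rgrad M ft xm \<mu> = w" by (simp add: rgrad_def w_def V_def g_def)
  have pw: "w \<in> V" "\<forall>u\<in>V. (g - w) \<bullet> u = 0" using pr unfolding w_def by auto
  have "(g - w) \<bullet> w = 0" using pw by blast
  then have e1: "w \<bullet> w = g \<bullet> w" by (simp add: inner_diff_left)
  have "G \<bullet> w = 0" using stat pw(1) unfolding V_def by blast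
  then have e2: "g \<bullet> w + 2 * ((xm - xs) \<bullet> w) = 0" by (simp add: G_def inner_add_left)
  have "\<bar>(xm - xs) \<bullet> w\<bar> \<le> norm (xm - xs) * norm w" by (rule Cauchy_Schwarz_ineq2)
  then have e3: "\<bar>(xm - xs) \<bullet> w\<bar> \<le> \<eta> * norm w" by (simp add: \<eta>_def)
  have e4: "norm w * norm w = w \<bullet> w" by (simp add: power2_norm_eq_inner[symmetric] power2_eq_square)
  have nw: "norm w * norm w \<le> (2 * \<eta>) * norm w" using e1 e2 e3 e4 by linarith
  have "norm w \<le> 2 * \<eta>"
  proof (cases "norm w = 0")
    case True then show ?thesis using eta0 by simp
  next
    case False then have "norm w > 0" by simp
    then show ?thesis using nw by (rule mult_right_le_imp_le[rotated])
  qed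
  then have "norm (rgrad M ft xm \<mu>) < \<epsilon>" using eta m eps unfolding rg by linarith
  moreover have "dist xm xs < d" using eta m by (simp add: \<eta>_def dist_norm)
  ultimately show ?thesis using xmM mu by blast
qed



theorem proposition3p6:
  fixes M :: "(real ^ 'n) set" and f :: "real ^ 'n \<Rightarrow> real"
    and ft :: "real ^ 'n \<Rightarrow> real \<Rightarrow> real" and xs :: "real ^ 'n"
  assumes "complete_riemannian_submanifold M"
    and "lsc f"
    and "smoothing_function ft f"
    and "local_min_on M f xs"
  shows "Liminf ((inf (nhds xs) (principal M)) \<times>\<^sub>F at_right 0)
           (\<lambda>(x, \<mu>). ereal (norm (rgrad M ft x \<mu>))) = 0"
proof -
  have emb: "embedded_submanifold M" using assms(1) by (simp add: complete_riemannian_submanifold_def)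
  obtain \<delta> where xsM: "xs \<in> M" and \<delta>: "\<delta> > 0" and lmin: "\<forall>x\<in>M. dist x xs < \<delta> \<longrightarrow> f xs \<le> f x"
    using assms(4) unfolding local_min_on_def by blast
  have C1: "\<forall>\<mu>>0. Ck_on 1 UNIV (\<lambda>z. ft z \<mu>)" using assms(3) unfolding smoothing_function_def by blast
  obtain \<kappa> \<omega> where kap: "\<kappa> > 0" and om: "(\<omega> \<longlongrightarrow> 0) (at_right 0)"
    and bnd: "\<forall>x. \<forall>\<mu>>0. \<bar>ft x \<mu> - f x\<bar> \<le> \<kappa> * \<omega> \<mu>"
    using assms(3) unfolding smoothing_function_def by blast
  from bspec[OF emb[unfolded embedded_submanifold_def] xsM]
  obtain T U W h where H: "subspace T \<and> open U \<and> xs \<in> U \<and> smooth_on W h \<and>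
        (\<forall>t\<in>T. \<forall>u\<in>T. h t \<bullet> u = 0) \<and>
        M \<inter> U = {t + h t | t. t \<in> T \<and> t \<in> W} \<inter> U"
    by (elim exE) (erule that)
  have T: "subspace T" using H by blast
  have U: "open U" "xs \<in> U" using H by blast+
  have sm: "smooth_on W h" using H by blast
  have orth: "\<forall>t\<in>T. \<forall>u\<in>T. h t \<bullet> u = 0" using H by blast
  have MU: "M \<inter> U = {t + h t | t. t \<in> T \<and> t \<in> W} \<inter> U" using H by blast
  have W: "open W" and hck: "Ck_on 1 W h" using sm unfolding smooth_on_def by auto
  obtain Dh where Dh: "\<And>s. s \<in> W \<Longrightarrow> (h has_derivative Dh s) (at s)"
    using ck1_deriv[OF hck] by blast
  have hc: "continuous_on W h" by (rule ck1_cont[OF hck])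
  have "xs \<in> M \<inter> U" using xsM U by blast
  then obtain s0 where s0: "xs = s0 + h s0" "s0 \<in> T" "s0 \<in> W" unfolding MU by blast
  have "isCont h s0" using hc W s0(3) continuous_on_eq_continuous_at by blast
  then have "isCont (\<lambda>t. t + h t) s0" by (intro continuous_intros) auto
  moreover have "s0 + h s0 \<in> U \<inter> ball xs \<delta>" using s0(1) U \<delta> by simp
  moreover have "open (U \<inter> ball xs \<delta>)" using U by auto
  ultimately have ev1: "\<forall>\<^sub>F t in nhds s0. t + h t \<in> U \<inter> ball xs \<delta>"
    using cont_ev[where f="\<lambda>t. t + h t"] by blast
  have ev2: "\<forall>\<^sub>F t in nhds s0. t \<in> W" using W s0(3) by (rule eventually_nhds_in_open)
  obtain r where r0: "r > 0" and rr: "\<And>t. dist t s0 \<le> r \<Longrightarrow> t + h t \<in> U \<inter> ball xs \<delta> \<and> t \<in> W"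
    using eventually_conj[OF ev1 ev2] unfolding eventually_nhds_metric_le by blast
  have rW: "cball s0 r \<subseteq> W" using rr by (auto simp: dist_commute)
  have rU: "\<And>t. dist t s0 \<le> r \<Longrightarrow> t + h t \<in> U \<and> dist (t + h t) xs < \<delta>"
    using rr by (auto simp: dist_commute)
  have core': "\<exists>x \<mu>. x \<in> M \<and> dist x xs < d \<and> 0 < \<mu> \<and> \<mu> < b \<and> norm (rgrad M ft x \<mu>) < \<epsilon>"
    if "d > 0" "b > 0" "\<epsilon> > 0" for d b \<epsilon>
    by (rule core[OF T U(1) W Dh hc orth MU s0(2,3,1) r0 rW rU lmin C1 kap om bnd that])
  let ?F = "(inf (nhds xs) (principal M)) \<times>\<^sub>F at_right (0::real)"
  let ?g = "\<lambda>(x, \<mu>). ereal (norm (rgrad M ft x \<mu>))"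
  have le: "Liminf ?F ?g \<le> 0"
    unfolding Liminf_def
  proof (rule SUP_least)
    fix P assume "P \<in> {P. eventually P ?F}"
    then obtain Pf Pg where Pf: "eventually Pf (inf (nhds xs) (principal M))"
      and Pg: "eventually Pg (at_right (0::real))" and PP: "\<forall>x y. Pf x \<longrightarrow> Pg y \<longrightarrow> P (x, y)"
      unfolding eventually_prod_filter by auto
    obtain d where d: "d > 0" "\<And>x. dist x xs < d \<Longrightarrow> x \<in> M \<longrightarrow> Pf x"
      using Pf unfolding eventually_inf_principal eventually_nhds_metric by blast
    obtain b where b: "b > 0" "\<And>y. y > 0 \<Longrightarrow> y < b \<Longrightarrow> Pg y"
      using Pg eventually_at_right[of "0::real" 1] by auto
    show "(INF x\<in>Collect P. ?g x) \<le> 0"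
    proof (rule ereal_le_epsilon2)
      fix \<epsilon> :: real assume "\<epsilon> > 0"
      then obtain x \<mu> where xm: "x \<in> M" "dist x xs < d" "0 < \<mu>" "\<mu> < b" "norm (rgrad M ft x \<mu>) < \<epsilon>"
        using core' d(1) b(1) by blast
      have "P (x, \<mu>)" using PP d(2) b(2) xm by blast
      then have "(INF x\<in>Collect P. ?g x) \<le> ?g (x, \<mu>)" by (intro INF_lower) simp
      also have "\<dots> \<le> ereal \<epsilon>" using xm(5) by simp
      finally show "(INF x\<in>Collect P. ?g x) \<le> 0 + ereal \<epsilon>" by simp
    qed
  qed
  have ge: "0 \<le> Liminf ?F ?g"
    unfolding Liminf_def
  proof (rule SUP_upper2[of "\<lambda>_. True"])
    show "(\<lambda>_. True) \<in> {P. eventually P ?F}" by simp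
    show "0 \<le> (INF x\<in>Collect (\<lambda>_. True). ?g x)" by (rule INF_greatest) auto
  qed
  show ?thesis using le ge by (rule antisym)
qed

end
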